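(* Let $K\in\mathbb{N}_0$. For every $s=(s_1,\dots,s_K)\in\{-,+\}^K$ let $g_s:\mathbb{R}^K\times\mathbb{R}\to\mathbb{R}$ be a continuous function such that for all $(\beta,\gamma)\in\mathbb{R}^K\times\mathbb{R}$: (i) $g_s(\beta,\gamma)$ is strictly increasing in $\gamma$; (ii) for all $k\in\{1,\dots,K\}$, if $s_k=+$ then $g_s(\beta,\gamma)$ is strictly increasing in $\beta_k$; (iii) for all $k\in\{1,\dots,K\}$, if $s_k=-$ then $g_s(\beta,\gamma)$ is strictly decreasing in $\beta_k$. Then the system of $2^K$ equations in $K+1$ variables $g_s(\beta,\gamma)=0$ for all $s\in\{-,+\}^K$ has at most one solution $(\beta,\gamma)$. *)

theory Defs
  imports "HOL-Analysis.Analysis"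
begin

end

theory Submission
  imports Defs
begin


lemma step_aux:
  fixes K :: nat and g :: "(nat \<Rightarrow> bool) \<Rightarrow> (nat \<Rightarrow> real) \<Rightarrow> real \<Rightarrow> real"
  assumes mono_plus: "\<And>s \<beta> \<gamma> k t t'. s \<in> {0..<K} \<rightarrow>\<^sub>E (UNIV :: bool set) \<Longrightarrow>
      \<beta> \<in> {0..<K} \<rightarrow>\<^sub>E (UNIV :: real set) \<Longrightarrow> k < K \<Longrightarrow> s k \<Longrightarrow> t < t' \<Longrightarrow>
      g s (\<beta>(k := t)) \<gamma> < g s (\<beta>(k := t')) \<gamma>"
    and mono_minus: "\<And>s \<beta> \<gamma> k t t'. s \<in> {0..<K} \<rightarrow>\<^sub>E (UNIV :: bool set) \<Longrightarrow>
      \<beta> \<in> {0..<K} \<rightarrow>\<^sub>E (UNIV :: real set) \<Longrightarrow> k < K \<Longrightarrow> \<not> s k \<Longrightarrow> t < t' \<Longrightarrow>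
      g s (\<beta>(k := t)) \<gamma> > g s (\<beta>(k := t')) \<gamma>"
    and b: "b \<in> {0..<K} \<rightarrow>\<^sub>E (UNIV :: real set)" and b': "b' \<in> {0..<K} \<rightarrow>\<^sub>E (UNIV :: real set)"
    and sdef: "s = (\<lambda>k. if k < K then b k \<le> b' k else undefined)"
    and mdef: "m = (\<lambda>j k. if k < j then b' k else b k)"
  shows "g s (m j) c \<le> g s (m (Suc j)) c \<and> (b j \<noteq> b' j \<longrightarrow> g s (m j) c < g s (m (Suc j)) c)"
proof (cases "b j = b' j")
  case True
  then have "m (Suc j) = m j" unfolding mdef by (auto simp: fun_eq_iff less_Suc_eq)
  then show ?thesis using True by simp
next
  case False
  then have jK: "j < K" using b b' by (metis PiE_arb atLeastLessThan_iff not_less zero_le)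
  have sP: "s \<in> {0..<K} \<rightarrow>\<^sub>E (UNIV :: bool set)" unfolding sdef by auto
  have mP: "m j \<in> {0..<K} \<rightarrow>\<^sub>E (UNIV :: real set)" using b b' unfolding mdef
    by (auto simp: PiE_def extensional_def)
  have e1: "m j = (m j)(j := b j)" unfolding mdef by (auto simp: fun_eq_iff)
  have e2: "m (Suc j) = (m j)(j := b' j)" unfolding mdef by (auto simp: fun_eq_iff less_Suc_eq)
  show ?thesis
  proof (cases "b j < b' j")
    case True
    then have "s j" using jK sdef by simp
    from mono_plus[OF sP mP jK this True, of c] e1 e2 False show ?thesis by simp
  next
    case F: False
    then have lt: "b' j < b j" using False by simp
    then have "\<not> s j" using jK sdef by simp
    from mono_minus[OF sP mP jK this lt, of c] e1 e2 False show ?thesis by simp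
  qed
qed

lemma chain_aux:
  fixes K :: nat and g :: "(nat \<Rightarrow> bool) \<Rightarrow> (nat \<Rightarrow> real) \<Rightarrow> real \<Rightarrow> real"
  assumes mono_plus: "\<And>s \<beta> \<gamma> k t t'. s \<in> {0..<K} \<rightarrow>\<^sub>E (UNIV :: bool set) \<Longrightarrow>
      \<beta> \<in> {0..<K} \<rightarrow>\<^sub>E (UNIV :: real set) \<Longrightarrow> k < K \<Longrightarrow> s k \<Longrightarrow> t < t' \<Longrightarrow>
      g s (\<beta>(k := t)) \<gamma> < g s (\<beta>(k := t')) \<gamma>"
    and mono_minus: "\<And>s \<beta> \<gamma> k t t'. s \<in> {0..<K} \<rightarrow>\<^sub>E (UNIV :: bool set) \<Longrightarrow>
      \<beta> \<in> {0..<K} \<rightarrow>\<^sub>E (UNIV :: real set) \<Longrightarrow> k < K \<Longrightarrow> \<not> s k \<Longrightarrow> t < t' \<Longrightarrow>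
      g s (\<beta>(k := t)) \<gamma> > g s (\<beta>(k := t')) \<gamma>"
    and b: "b \<in> {0..<K} \<rightarrow>\<^sub>E (UNIV :: real set)" and b': "b' \<in> {0..<K} \<rightarrow>\<^sub>E (UNIV :: real set)"
    and sdef: "s = (\<lambda>k. if k < K then b k \<le> b' k else undefined)"
  shows "g s b c \<le> g s b' c \<and> (b \<noteq> b' \<longrightarrow> g s b c < g s b' c)"
proof -
  define m where "m = (\<lambda>j k. if k < j then b' k else b k)"
  note st = step_aux[where K=K and g=g, OF mono_plus mono_minus b b' sdef m_def]
  have le: "g s (m i) c \<le> g s (m j) c" if "i \<le> j" for i j
    using that
  proof (induction j rule: dec_induct)
    case base then show ?case by simp
  next
    case (step n) then show ?case using st[of n c] by linarith
  qed
  have m0: "m 0 = b" unfolding m_def by auto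
  have mK: "m K = b'" unfolding m_def using b b' by (auto simp: fun_eq_iff PiE_def extensional_def)
  have "b \<noteq> b' \<longrightarrow> g s b c < g s b' c"
  proof
    assume "b \<noteq> b'"
    then obtain k where kd: "b k \<noteq> b' k" by auto
    then have kK: "k < K" using b b' by (metis PiE_arb atLeastLessThan_iff not_less zero_le)
    have "g s (m 0) c \<le> g s (m k) c" by (rule le) simp
    also have "\<dots> < g s (m (Suc k)) c" using st[of k c] kd by simp
    also have "\<dots> \<le> g s (m K) c" by (rule le) (use kK in simp)
    finally show "g s b c < g s b' c" using m0 mK by simp
  qed
  moreover have "g s b c \<le> g s b' c" using le[of 0 K] m0 mK by simp
  ultimately show ?thesis by simp
qed

lemma half_aux:
  fixes K :: nat and g :: "(nat \<Rightarrow> bool) \<Rightarrow> (nat \<Rightarrow> real) \<Rightarrow> real \<Rightarrow> real"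
  assumes mono_gamma: "\<And>s \<beta>. s \<in> {0..<K} \<rightarrow>\<^sub>E (UNIV :: bool set) \<Longrightarrow>
      \<beta> \<in> {0..<K} \<rightarrow>\<^sub>E (UNIV :: real set) \<Longrightarrow> strict_mono (g s \<beta>)"
    and mono_plus: "\<And>s \<beta> \<gamma> k t t'. s \<in> {0..<K} \<rightarrow>\<^sub>E (UNIV :: bool set) \<Longrightarrow>
      \<beta> \<in> {0..<K} \<rightarrow>\<^sub>E (UNIV :: real set) \<Longrightarrow> k < K \<Longrightarrow> s k \<Longrightarrow> t < t' \<Longrightarrow>
      g s (\<beta>(k := t)) \<gamma> < g s (\<beta>(k := t')) \<gamma>"
    and mono_minus: "\<And>s \<beta> \<gamma> k t t'. s \<in> {0..<K} \<rightarrow>\<^sub>E (UNIV :: bool set) \<Longrightarrow>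
      \<beta> \<in> {0..<K} \<rightarrow>\<^sub>E (UNIV :: real set) \<Longrightarrow> k < K \<Longrightarrow> \<not> s k \<Longrightarrow> t < t' \<Longrightarrow>
      g s (\<beta>(k := t)) \<gamma> > g s (\<beta>(k := t')) \<gamma>"
    and b: "b \<in> {0..<K} \<rightarrow>\<^sub>E (UNIV :: real set)" and b': "b' \<in> {0..<K} \<rightarrow>\<^sub>E (UNIV :: real set)"
    and z: "\<forall>s \<in> {0..<K} \<rightarrow>\<^sub>E (UNIV :: bool set). g s b c = 0"
    and z': "\<forall>s \<in> {0..<K} \<rightarrow>\<^sub>E (UNIV :: bool set). g s b' c' = 0"
    and cc: "c \<le> c'"
  shows "b = b' \<and> c = c'"
proof (rule ccontr)
  assume ne: "\<not> (b = b' \<and> c = c')"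
  define s where "s = (\<lambda>k. if k < K then b k \<le> b' k else (undefined::bool))"
  have sP: "s \<in> {0..<K} \<rightarrow>\<^sub>E (UNIV :: bool set)" unfolding s_def by auto
  note ch = chain_aux[where K=K and g=g, OF mono_plus mono_minus b b' s_def, of c]
  have sm: "strict_mono (g s b')" using mono_gamma[OF sP b'] .
  have "g s b' c \<le> g s b' c'" using sm cc by (metis order.order_iff_strict strict_mono_less)
  moreover have "c < c' \<Longrightarrow> g s b' c < g s b' c'" using sm by (simp add: strict_mono_less)
  ultimately have "g s b c < g s b' c'" using ch ne cc by force
  then show False using z z' sP by auto
qed

theorem lemma2:
  fixes K :: nat
    and g :: "(nat \<Rightarrow> bool) \<Rightarrow> (nat \<Rightarrow> real) \<Rightarrow> real \<Rightarrow> real"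
  assumes cont: "\<And>s. s \<in> {0..<K} \<rightarrow>\<^sub>E (UNIV :: bool set) \<Longrightarrow>
      continuous_on (({0..<K} \<rightarrow>\<^sub>E (UNIV :: real set)) \<times> UNIV) (\<lambda>(\<beta>, \<gamma>). g s \<beta> \<gamma>)"
    and mono_gamma: "\<And>s \<beta>. s \<in> {0..<K} \<rightarrow>\<^sub>E (UNIV :: bool set) \<Longrightarrow>
      \<beta> \<in> {0..<K} \<rightarrow>\<^sub>E (UNIV :: real set) \<Longrightarrow> strict_mono (g s \<beta>)"
    and mono_plus: "\<And>s \<beta> \<gamma> k t t'. s \<in> {0..<K} \<rightarrow>\<^sub>E (UNIV :: bool set) \<Longrightarrow>
      \<beta> \<in> {0..<K} \<rightarrow>\<^sub>E (UNIV :: real set) \<Longrightarrow> k < K \<Longrightarrow> s k \<Longrightarrow> t < t' \<Longrightarrow>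
      g s (\<beta>(k := t)) \<gamma> < g s (\<beta>(k := t')) \<gamma>"
    and mono_minus: "\<And>s \<beta> \<gamma> k t t'. s \<in> {0..<K} \<rightarrow>\<^sub>E (UNIV :: bool set) \<Longrightarrow>
      \<beta> \<in> {0..<K} \<rightarrow>\<^sub>E (UNIV :: real set) \<Longrightarrow> k < K \<Longrightarrow> \<not> s k \<Longrightarrow> t < t' \<Longrightarrow>
      g s (\<beta>(k := t)) \<gamma> > g s (\<beta>(k := t')) \<gamma>"
  shows "\<forall>\<beta> \<gamma> \<beta>' \<gamma>'.
      \<beta> \<in> {0..<K} \<rightarrow>\<^sub>E (UNIV :: real set) \<and> \<beta>' \<in> {0..<K} \<rightarrow>\<^sub>E (UNIV :: real set) \<and>
      (\<forall>s \<in> {0..<K} \<rightarrow>\<^sub>E (UNIV :: bool set). g s \<beta> \<gamma> = 0) \<and>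
      (\<forall>s \<in> {0..<K} \<rightarrow>\<^sub>E (UNIV :: bool set). g s \<beta>' \<gamma>' = 0)
      \<longrightarrow> \<beta> = \<beta>' \<and> \<gamma> = \<gamma>'"
proof (intro allI impI)
  fix \<beta> \<gamma> \<beta>' \<gamma>'
  assume h: "\<beta> \<in> {0..<K} \<rightarrow>\<^sub>E (UNIV :: real set) \<and> \<beta>' \<in> {0..<K} \<rightarrow>\<^sub>E (UNIV :: real set) \<and>
      (\<forall>s \<in> {0..<K} \<rightarrow>\<^sub>E (UNIV :: bool set). g s \<beta> \<gamma> = 0) \<and>
      (\<forall>s \<in> {0..<K} \<rightarrow>\<^sub>E (UNIV :: bool set). g s \<beta>' \<gamma>' = 0)"
  show "\<beta> = \<beta>' \<and> \<gamma> = \<gamma>'"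
  proof (cases "\<gamma> \<le> \<gamma>'")
    case True
    then show ?thesis using half_aux[where K=K and g=g, OF mono_gamma mono_plus mono_minus, of \<beta> \<beta>' \<gamma> \<gamma>'] h by blast
  next
    case False
    then show ?thesis using half_aux[where K=K and g=g, OF mono_gamma mono_plus mono_minus, of \<beta>' \<beta> \<gamma>' \<gamma>] h by auto
  qed
qed

end
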